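(* Let $g$, $\mathbf{g}=g^{\oplus n}$ be as in the context, and let $\mathbf{A},\mathbf{B},\mathbf{C},\mathbf{D}$ be linear operators on $\mathbf{g}$ with components $A_{ij},B_{ij},C_{ij},D_{ij}$ such that $A_{ij}^*=-A_{ji}$, $D_{ij}^*=-D_{ji}$, $B_{ij}^*=C_{ji}$ and such that PB$(\mathbf{A},\mathbf{B},\mathbf{C},\mathbf{D})$ is a Poisson bracket on $\mathbf{g}$. All subscripts are taken mod $n$. Suppose (i) $A_{i+1,j+1}=-B_{i+1,j}=C_{i,j+1}=-D_{i,j}$ for all $i\neq j$; (ii) $A_{j+1,j+1}-D_{j,j}+B_{j+1,j}-C_{j,j+1}=0$ for all $1\le j\le n$. Let $\sigma:\mathbf{g}\to\mathbf{g}$, $\sigma(u_1,\dots,u_n)=(u_2,\dots,u_n,u_1)$, let $\mathcal{M}(u_1,\dots,u_n)=u_n\cdots u_1$, and $T_j=u_j\cdots u_1\cdot u_n\cdots u_{j+1}$ (so $\mathcal{M}\circ\sigma^j(\mathbf{u})=T_j$, $T_0=T_n=\mathcal{M}(\mathbf{u})$). Then: (1) for each $j$, the map $\mathcal{M}\circ\sigma^j:\mathbf{g}\to g$ is Poisson when $g$ carries the bracket PB$(A_{j+1,j+1},B_{j+1,j},C_{j,j+1},D_{j,j})$, i.e. $\{\varphi\circ\mathcal{M}\circ\sigma^j,\psi\circ\mathcal{M}\circ\sigma^j\}_{\mathbf{g}}=\{\varphi,\psi\}_g\circ\mathcal{M}\circ\sigma^j$ for all smooth $\varphi,\psi$ on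 $g$; (2) for every smooth Ad-invariant $\varphi$ on $g$, the Hamiltonian equations on $\mathbf{g}$ generated by $\Phi(\mathbf{u})=\varphi(u_n\cdots u_1)$ are $\dot u_j=u_j\,\mathcal{L}_{j-1}-\mathcal{L}_j\,u_j$ with $\mathcal{L}_j=R_j(d\varphi(T_j))$, where $R_j=A_{j+1,j+1}+B_{j+1,j}=D_{j,j}+C_{j,j+1}$.
   Context: $g$ is an associative algebra with a nondegenerate symmetric bilinear form $\langle\cdot,\cdot\rangle$ with $\langle uv,w\rangle=\langle u,vw\rangle$; $X^*$ denotes the adjoint of a linear operator on $g$. For smooth $\varphi$ on $g$, $\nabla\varphi(u)$ is defined by $\langle\nabla\varphi(u),X\rangle=\frac{d}{d\varepsilon}\varphi(u+\varepsilon X)|_{\varepsilon=0}$, $d\varphi(u)=u\nabla\varphi(u)$, $d'\varphi(u)=\nabla\varphi(u)u$; $\varphi$ is Ad-invariant if $\varphi(huh^{-1})=\varphi(u)$ (then $d\varphi=d'\varphi$). For linear operators $A,B,C,D$ on $g$, PB$(A,B,C,D)$ is $\{\varphi,\psi\}(u)=\langle A(d'\varphi),d'\psi\rangle-\langle D(d\varphi),d\psi\rangle+\langle B(d\varphi),d'\psi\rangle-\langle C(d'\varphi),d\psi\rangle$. $\mathbf{g}=g\oplus\cdots\oplus g$ ($n$ copies), componentwise multiplication, form $\langle\langle\mathbf{u},\mathbf{v}\rangle\rangle=\sum_k\langle u_k,v_k\rangle$; operator components $(\mathbf{A}(\mathbf{u}))_i=\sum_jA_{ij}(u_j)$. For smooth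 $\Phi$ on $\mathbf{g}$, $\nabla_j\Phi$ is the $j$-th gradient component, $d_j\Phi=u_j\nabla_j\Phi$, $d'_j\Phi=\nabla_j\Phi\,u_j$, and PB$(\mathbf{A},\mathbf{B},\mathbf{C},\mathbf{D})$ is $\{\Phi,\Psi\}=\sum_{i,j}\big(\langle A_{ij}(d'_j\Phi),d'_i\Psi\rangle-\langle D_{ij}(d_j\Phi),d_i\Psi\rangle+\langle B_{ij}(d_j\Phi),d'_i\Psi\rangle-\langle C_{ij}(d'_j\Phi),d_i\Psi\rangle\big)$. Hamiltonian equations generated by $\Phi$: $\frac{d}{dt}\ell(\mathbf{u})=\{\Phi,\ell\}(\mathbf{u})$ for all linear functions $\ell$. *)

theory Defs
  imports "HOL-Analysis.Analysis"
begin

fun Ck :: "nat \<Rightarrow> ('v::euclidean_space \<Rightarrow> real) \<Rightarrow> bool" where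
  "Ck 0 f = continuous_on UNIV f"
| "Ck (Suc k) f = ((\<forall>x. f differentiable (at x)) \<and>
       (\<forall>b\<in>Basis. Ck k (\<lambda>x. frechet_derivative f (at x) b)))"

definition smooth :: "('v::euclidean_space \<Rightarrow> real) \<Rightarrow> bool" where
  "smooth f \<longleftrightarrow> (\<forall>k. Ck k f)"

definition is_poisson ::
  "(('v::euclidean_space \<Rightarrow> real) \<Rightarrow> ('v \<Rightarrow> real) \<Rightarrow> 'v \<Rightarrow> real) \<Rightarrow> bool" where
  "is_poisson P \<longleftrightarrow>
     (\<forall>f g. smooth f \<longrightarrow> smooth g \<longrightarrow> smooth (P f g)) \<and>
     (\<forall>f g h a b. smooth f \<longrightarrow> smooth g \<longrightarrow> smooth h \<longrightarrow>
        P (\<lambda>x. a * f x + b * g x) h = (\<lambda>x. a * P f h x + b * P g h x)) \<and>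
     (\<forall>f g. smooth f \<longrightarrow> smooth g \<longrightarrow> P f g = (\<lambda>x. - P g f x)) \<and>
     (\<forall>f g h. smooth f \<longrightarrow> smooth g \<longrightarrow> smooth h \<longrightarrow>
        P f (\<lambda>x. g x * h x) = (\<lambda>x. P f g x * h x + g x * P f h x)) \<and>
     (\<forall>f g h. smooth f \<longrightarrow> smooth g \<longrightarrow> smooth h \<longrightarrow>
        (\<forall>x. P f (P g h) x + P g (P h f) x + P h (P f g) x = 0))"

definition grad :: "('a::real_vector \<Rightarrow> 'a \<Rightarrow> real) \<Rightarrow> ('a \<Rightarrow> real) \<Rightarrow> 'a \<Rightarrow> 'a" where
  "grad form \<phi> u = (THE v. \<forall>X. ((\<lambda>e. \<phi> (u + e *\<^sub>R X)) has_real_derivative form v X) (at 0))"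

definition dl :: "('a::real_algebra \<Rightarrow> 'a \<Rightarrow> real) \<Rightarrow> ('a \<Rightarrow> real) \<Rightarrow> 'a \<Rightarrow> 'a" where
  "dl form \<phi> u = u * grad form \<phi> u"

definition dr :: "('a::real_algebra \<Rightarrow> 'a \<Rightarrow> real) \<Rightarrow> ('a \<Rightarrow> real) \<Rightarrow> 'a \<Rightarrow> 'a" where
  "dr form \<phi> u = grad form \<phi> u * u"

definition PB :: "('a::real_algebra \<Rightarrow> 'a \<Rightarrow> real) \<Rightarrow> ('a \<Rightarrow> 'a) \<Rightarrow> ('a \<Rightarrow> 'a) \<Rightarrow>
    ('a \<Rightarrow> 'a) \<Rightarrow> ('a \<Rightarrow> 'a) \<Rightarrow> ('a \<Rightarrow> real) \<Rightarrow> ('a \<Rightarrow> real) \<Rightarrow> 'a \<Rightarrow> real" where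
  "PB form A B C D \<phi> \<psi> u =
     form (A (dr form \<phi> u)) (dr form \<psi> u) - form (D (dl form \<phi> u)) (dl form \<psi> u)
   + form (B (dl form \<phi> u)) (dr form \<psi> u) - form (C (dr form \<phi> u)) (dl form \<psi> u)"

definition ad_invariant :: "('a::ring_1 \<Rightarrow> real) \<Rightarrow> bool" where
  "ad_invariant \<phi> \<longleftrightarrow> (\<forall>h h' u. h * h' = 1 \<longrightarrow> h' * h = 1 \<longrightarrow> \<phi> (h * u * h') = \<phi> u)"

section \<open>The direct sum g^n, modelled as 'a ^ 'n with the components ordered by enum\<close>

text \<open>Position (1-based, taken mod n) i of the cyclically ordered index type.\<close>
definition ix :: "int \<Rightarrow> 'n::enum" where
  "ix i = enum_class.enum ! nat ((i - 1) mod int CARD('n))"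

definition pos :: "'n::enum \<Rightarrow> int" where
  "pos k = (THE i. 1 \<le> i \<and> i \<le> int CARD('n) \<and> ix i = k)"

definition cmp :: "'a ^ 'n::enum \<Rightarrow> int \<Rightarrow> 'a" where
  "cmp u i = u $ ix i"

definition gradc :: "('a::real_vector \<Rightarrow> 'a \<Rightarrow> real) \<Rightarrow> ('a ^ 'n \<Rightarrow> real) \<Rightarrow> 'a ^ 'n \<Rightarrow> 'n \<Rightarrow> 'a" where
  "gradc form \<Phi> u j = (THE v. \<forall>X. ((\<lambda>e. \<Phi> (u + e *\<^sub>R axis j X)) has_real_derivative form v X) (at 0))"

definition dlc :: "('a::real_algebra \<Rightarrow> 'a \<Rightarrow> real) \<Rightarrow> ('a ^ 'n \<Rightarrow> real) \<Rightarrow> 'a ^ 'n \<Rightarrow> 'n \<Rightarrow> 'a" where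
  "dlc form \<Phi> u j = u $ j * gradc form \<Phi> u j"

definition drc :: "('a::real_algebra \<Rightarrow> 'a \<Rightarrow> real) \<Rightarrow> ('a ^ 'n \<Rightarrow> real) \<Rightarrow> 'a ^ 'n \<Rightarrow> 'n \<Rightarrow> 'a" where
  "drc form \<Phi> u j = gradc form \<Phi> u j * u $ j"

definition PBn :: "('a::real_algebra \<Rightarrow> 'a \<Rightarrow> real) \<Rightarrow>
    ('n::finite \<Rightarrow> 'n \<Rightarrow> 'a \<Rightarrow> 'a) \<Rightarrow> ('n \<Rightarrow> 'n \<Rightarrow> 'a \<Rightarrow> 'a) \<Rightarrow>
    ('n \<Rightarrow> 'n \<Rightarrow> 'a \<Rightarrow> 'a) \<Rightarrow> ('n \<Rightarrow> 'n \<Rightarrow> 'a \<Rightarrow> 'a) \<Rightarrow>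
    ('a ^ 'n \<Rightarrow> real) \<Rightarrow> ('a ^ 'n \<Rightarrow> real) \<Rightarrow> 'a ^ 'n \<Rightarrow> real" where
  "PBn form A B C D \<Phi> \<Psi> u =
     (\<Sum>i\<in>UNIV. \<Sum>j\<in>UNIV.
        form (A i j (drc form \<Phi> u j)) (drc form \<Psi> u i)
      - form (D i j (dlc form \<Phi> u j)) (dlc form \<Psi> u i)
      + form (B i j (dlc form \<Phi> u j)) (drc form \<Psi> u i)
      - form (C i j (drc form \<Phi> u j)) (dlc form \<Psi> u i))"

text \<open>Ordered product f hi * f (hi-1) * ... * f lo (empty product = 1).\<close>
definition dprod :: "(int \<Rightarrow> 'a::monoid_mult) \<Rightarrow> int \<Rightarrow> int \<Rightarrow> 'a" where
  "dprod f lo hi = prod_list (map f (rev [lo..hi]))"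

definition Mon :: "'a::monoid_mult ^ 'n::enum \<Rightarrow> 'a" where
  "Mon u = dprod (cmp u) 1 (int CARD('n))"

definition Tj :: "'a::monoid_mult ^ 'n::enum \<Rightarrow> int \<Rightarrow> 'a" where
  "Tj u j = dprod (cmp u) 1 j * dprod (cmp u) (j + 1) (int CARD('n))"

definition shift :: "('a, 'n::enum) vec \<Rightarrow> ('a, 'n) vec" where
  "shift u = vec_lambda (\<lambda>k. cmp u (pos k + 1))"

end

theory Submission imports Defs begin

abbreviation NN :: "'n::enum itself \<Rightarrow> int" where "NN _ \<equiv> int CARD('n)"

lemma card_pos_enum: "0 < CARD('n::enum)"
  by simp

lemma ix_eq_iff: "(ix i = (ix i' :: 'n::enum)) \<longleftrightarrow> i mod int CARD('n) = i' mod int CARD('n)"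
proof -
  let ?N = "int CARD('n)"
  have N: "?N > 0" by simp
  have len: "length (enum_class.enum :: 'n list) = CARD('n)" by (simp add: card_UNIV_length_enum)
  have d: "distinct (enum_class.enum :: 'n list)" by (rule enum_distinct)
  have a: "nat ((i - 1) mod ?N) < length (enum_class.enum :: 'n list)"
    using N len by (simp add: nat_less_iff)
  have b: "nat ((i' - 1) mod ?N) < length (enum_class.enum :: 'n list)"
    using N len by (simp add: nat_less_iff)
  have "(ix i = (ix i' :: 'n)) \<longleftrightarrow> nat ((i - 1) mod ?N) = nat ((i' - 1) mod ?N)"
    unfolding ix_def using nth_eq_iff_index_eq[OF d a b] by simp
  also have "\<dots> \<longleftrightarrow> (i - 1) mod ?N = (i' - 1) mod ?N"
    using N by (simp add: eq_nat_nat_iff)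
  also have "\<dots> \<longleftrightarrow> i mod ?N = i' mod ?N"
    by (simp add: mod_eq_dvd_iff)
  finally show ?thesis .
qed

lemma ix_periodic: "(ix (i + int CARD('n)) :: 'n::enum) = ix i"
  by (simp add: ix_eq_iff)

lemma window_uniq:
  fixes x y a N :: int
  assumes "a < x" "x \<le> a + N" "a < y" "y \<le> a + N" "x mod N = y mod N"
  shows "x = y"
proof (rule ccontr)
  assume "x \<noteq> y"
  then have "x - y \<noteq> 0" by simp
  moreover have "N dvd x - y" using assms(5) by (simp add: mod_eq_dvd_iff)
  ultimately have "\<bar>N\<bar> \<le> \<bar>x - y\<bar>" using dvd_imp_le_int by blast
  then show False using assms(1-4) by linarith
qed

lemma ix_surj: "\<exists>i. 1 \<le> i \<and> i \<le> int CARD('n) \<and> ix i = (k :: 'n::enum)"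
proof -
  let ?N = "int CARD('n)"
  have len: "length (enum_class.enum :: 'n list) = CARD('n)" by (simp add: card_UNIV_length_enum)
  have "k \<in> set enum_class.enum" by (simp add: UNIV_enum[symmetric])
  then obtain m where m: "m < CARD('n)" "enum_class.enum ! m = k"
    by (metis in_set_conv_nth len)
  have "(int m + 1 - 1) mod ?N = int m" using m by simp
  then have "ix (int m + 1) = k" unfolding ix_def using m by simp
  then show ?thesis using m by (intro exI[of _ "int m + 1"]) auto
qed

lemma pos_prop: "1 \<le> pos k \<and> pos k \<le> int CARD('n) \<and> ix (pos k) = (k :: 'n::enum)"
proof -
  obtain i where i: "1 \<le> i" "i \<le> int CARD('n)" "ix i = k" using ix_surj by blast
  have u: "i' = i" if "1 \<le> i'" "i' \<le> int CARD('n)" "ix i' = k" for i'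
  proof -
    have "ix i' = (ix i :: 'n)" using that(3) i(3) by simp
    then have "i' mod int CARD('n) = i mod int CARD('n)" by (simp only: ix_eq_iff)
    then show ?thesis using window_uniq[of 0 i' "int CARD('n)" i] that i by simp
  qed
  have "\<exists>!i. 1 \<le> i \<and> i \<le> int CARD('n) \<and> ix i = k"
    using i u by blast
  then show ?thesis unfolding pos_def by (rule theI')
qed

lemma ix_pos[simp]: "ix (pos k) = k" using pos_prop by blast

lemma pos_ix: "1 \<le> i \<Longrightarrow> i \<le> int CARD('n) \<Longrightarrow> pos (ix i :: 'n::enum) = i"
proof -
  assume a: "1 \<le> i" "i \<le> int CARD('n)"
  have p: "1 \<le> pos (ix i :: 'n)" "pos (ix i :: 'n) \<le> int CARD('n)" "ix (pos (ix i :: 'n)) = (ix i :: 'n)"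
    using pos_prop by blast+
  have "pos (ix i :: 'n) mod int CARD('n) = i mod int CARD('n)" using p(3) by (simp only: ix_eq_iff)
  then show ?thesis using window_uniq[of 0 "pos (ix i :: 'n)" "int CARD('n)" i] a p by simp
qed

lemma ix_shift_pos: "(ix (pos (ix i :: 'n::enum) + c) :: 'n) = ix (i + c)"
proof -
  have "pos (ix i :: 'n) mod int CARD('n) = i mod int CARD('n)"
    using ix_pos[of "ix i :: 'n"] by (simp only: ix_eq_iff)
  then have "(pos (ix i :: 'n) + c) mod int CARD('n) = (i + c) mod int CARD('n)"
    by (simp add: mod_eq_dvd_iff)
  then show ?thesis by (simp add: ix_eq_iff)
qed

lemma cmp_shift: "cmp (shift u) p = cmp u (p + 1)"
  unfolding cmp_def shift_def by (metis ix_shift_pos vec_lambda_beta cmp_def)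

lemma cmp_shift_pow: "cmp ((shift ^^ j) u) p = cmp u (p + int j)"
  by (induction j arbitrary: p) (auto simp: cmp_shift algebra_simps)

lemma ix_inj_window: "inj_on (ix :: int \<Rightarrow> 'n::enum) {a + 1..a + int CARD('n)}"
proof
  fix x y assume x: "x \<in> {a + 1..a + int CARD('n)}" and y: "y \<in> {a + 1..a + int CARD('n)}"
    and e: "(ix x :: 'n) = ix y"
  have "x mod int CARD('n) = y mod int CARD('n)" using e by (simp only: ix_eq_iff)
  then show "x = y" using window_uniq[of a x "int CARD('n)" y] x y by simp
qed

lemma ix_image_window: "(ix :: int \<Rightarrow> 'n::enum) ` {a + 1..a + int CARD('n)} = UNIV"
proof -
  have "card ((ix :: int \<Rightarrow> 'n) ` {a + 1..a + int CARD('n)}) = CARD('n)"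
    using card_image[OF ix_inj_window[where a=a]] by simp
  then show ?thesis by (simp add: card_eq_UNIV_imp_eq_UNIV)
qed

lemma sum_UNIV_window: "(\<Sum>k\<in>UNIV. f k) = (\<Sum>q\<in>{a + 1..a + int CARD('n)}. f (ix q :: 'n::enum))"
  using sum.reindex[OF ix_inj_window[where a=a], of f] ix_image_window[where a=a, where 'n='n] by simp


lemma dprod_empty: "hi < lo \<Longrightarrow> dprod f lo hi = 1"
  unfolding dprod_def by simp

lemma dprod_rec: "lo \<le> hi \<Longrightarrow> dprod f lo hi = f hi * dprod f lo (hi - 1)"
  unfolding dprod_def by (simp add: upto_rec2)

lemma dprod_single: "dprod f lo lo = f lo"
  unfolding dprod_def by simp

lemma dprod_split:
  assumes "lo - 1 \<le> m" "m \<le> hi"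
  shows "dprod f lo hi = dprod f (m + 1) hi * dprod f lo m"
proof (cases "m = hi")
  case True then show ?thesis by (simp add: dprod_empty)
next
  case False
  then have "[lo..hi] = [lo..m] @ [m+1..hi]"
    using assms upto_split1[of lo "m+1" hi] by simp
  then show ?thesis unfolding dprod_def by simp
qed

lemma dprod_cong:
  assumes "\<And>p. lo \<le> p \<Longrightarrow> p \<le> hi \<Longrightarrow> f p = g p"
  shows "dprod f lo hi = dprod g lo hi"
proof -
  have "map f (rev [lo..hi]) = map g (rev [lo..hi])"
    by (rule map_cong) (use assms in auto)
  then show ?thesis unfolding dprod_def by (rule arg_cong[where f=prod_list])
qed

lemma dprod_shift: "dprod (\<lambda>p. f (p + c)) lo hi = dprod f (lo + c) (hi + c)"
proof (cases "hi < lo")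
  case True then show ?thesis by (simp add: dprod_empty)
next
  case False
  then have "lo - 1 \<le> hi" by simp
  then show ?thesis
  proof (induction hi rule: int_ge_induct)
    case base then show ?case by (simp add: dprod_empty)
  next
    case (step i)
    have "dprod (\<lambda>p. f (p + c)) lo (i + 1) = f (i + 1 + c) * dprod (\<lambda>p. f (p + c)) lo i"
      using step(1) dprod_rec[of lo "i+1"] by simp
    also have "\<dots> = f (i + 1 + c) * dprod f (lo + c) (i + c)" using step(2) by simp
    also have "\<dots> = dprod f (lo + c) (i + 1 + c)"
      using step(1) dprod_rec[of "lo + c" "i + 1 + c" f] by (simp add: algebra_simps)
    finally show ?case by simp
  qed
qed

lemma Mon_shift_pow: "Mon ((shift ^^ j) u) = dprod (cmp u) (int j + 1) (int j + int CARD('n))"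
  for u :: "'a::monoid_mult ^ 'n::enum"
  unfolding Mon_def cmp_shift_pow dprod_shift by (simp add: add.commute)


locale frm =
  fixes form :: "'a::{real_algebra_1, euclidean_space} \<Rightarrow> 'a \<Rightarrow> real"
  assumes form_bilinear: "bilinear form"
    and form_sym: "\<And>u v. form u v = form v u"
    and form_nondeg: "\<And>v. (\<forall>w. form v w = 0) \<Longrightarrow> v = 0"
    and form_inv: "\<And>u v w. form (u * v) w = form u (v * w)"
begin

lemma lin1: "linear (\<lambda>v. form v X)"
  using form_bilinear unfolding bilinear_def by blast

lemma lin2: "linear (\<lambda>v. form X v)"
  using form_bilinear unfolding bilinear_def by blast

lemma form_add1: "form (a + b) X = form a X + form b X"
  using linear_add[OF lin1] by blast
lemma form_diff1: "form (a - b) X = form a X - form b X"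
  using linear_diff[OF lin1] by blast
lemma form_neg1: "form (- a) X = - form a X"
  using linear_neg[OF lin1] by blast
lemma form_scale1: "form (c *\<^sub>R a) X = c * form a X"
  using linear_scale[OF lin1] by simp
lemma form_add2: "form X (a + b) = form X a + form X b"
  using linear_add[OF lin2] by blast
lemma form_diff2: "form X (a - b) = form X a - form X b"
  using linear_diff[OF lin2] by blast
lemma form_scale2: "form X (c *\<^sub>R a) = c * form X a"
  using linear_scale[OF lin2] by simp
lemma form_sum1: "form (\<Sum>i\<in>S. f i) X = (\<Sum>i\<in>S. form (f i) X)"
  using linear_sum[OF lin1] by blast
lemma form_sum2: "form X (\<Sum>i\<in>S. f i) = (\<Sum>i\<in>S. form X (f i))"
  using linear_sum[OF lin2] by blast

lemma form_LXR: "form a (L * X * R) = form (R * a * L) X"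
proof -
  have "form a (L * X * R) = form (L * X * R) a" by (rule form_sym)
  also have "\<dots> = form (L * X) (R * a)" by (rule form_inv)
  also have "\<dots> = form L (X * (R * a))" by (simp add: form_inv)
  also have "\<dots> = form (X * (R * a)) L" by (rule form_sym)
  also have "\<dots> = form X (R * a * L)" by (simp add: form_inv mult.assoc)
  also have "\<dots> = form (R * a * L) X" by (rule form_sym)
  finally show ?thesis .
qed

lemma form_wu: "form x (w * u) = form w (u * x)"
  by (metis form_inv form_sym)

lemma form_uw: "form x (u * w) = form w (x * u)"
  by (metis form_inv form_sym)

lemma form_eq_imp: "(\<And>X. form v X = form v' X) \<Longrightarrow> v = v'"
proof -
  assume a: "\<And>X. form v X = form v' X"
  have "\<forall>w. form (v - v') w = 0" using a by (simp add: form_diff1)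
  then have "v - v' = 0" by (rule form_nondeg)
  then show ?thesis by simp
qed

definition Fm :: "'a \<Rightarrow> 'a" where "Fm v = (\<Sum>b\<in>Basis. form v b *\<^sub>R b)"

lemma Fm_linear: "linear Fm"
proof (rule linearI)
  fix a b :: 'a and c :: real
  show "Fm (a + b) = Fm a + Fm b"
    unfolding Fm_def by (simp add: form_add1 scaleR_add_left sum.distrib)
  show "Fm (c *\<^sub>R a) = c *\<^sub>R Fm a"
    unfolding Fm_def by (simp add: form_scale1 scaleR_sum_right)
qed

lemma Fm_inner: "Fm v \<bullet> X = form v X"
proof -
  have "form v X = form v (\<Sum>b\<in>Basis. (X \<bullet> b) *\<^sub>R b)" by (simp add: euclidean_representation)
  also have "\<dots> = (\<Sum>b\<in>Basis. (X \<bullet> b) * form v b)" by (simp add: form_sum2 form_scale2)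
  also have "\<dots> = Fm v \<bullet> X" unfolding Fm_def inner_sum_left by (simp add: mult.commute inner_commute)
  finally show ?thesis by simp
qed

lemma Fm_inj: "inj Fm"
proof (rule linear_injective_0[OF Fm_linear, THEN iffD2], intro allI impI)
  fix v assume "Fm v = 0"
  then have "\<forall>w. form v w = 0" using Fm_inner by (metis inner_zero_left)
  then show "v = 0" by (rule form_nondeg)
qed

lemma Fm_surj: "surj Fm"
  using linear_injective_imp_surjective[OF Fm_linear Fm_inj] by simp

lemma riesz: assumes "linear g" shows "\<exists>v. \<forall>X. form v X = g X"
proof -
  define w where "w = (\<Sum>b\<in>Basis. g b *\<^sub>R b)"
  obtain v where v: "Fm v = w" using Fm_surj by (metis surjD)
  have "form v X = g X" for X
  proof -
    have "g X = g (\<Sum>b\<in>Basis. (X \<bullet> b) *\<^sub>R b)" by (simp add: euclidean_representation)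
    also have "\<dots> = (\<Sum>b\<in>Basis. (X \<bullet> b) * g b)"
      by (simp only: linear_sum[OF assms] linear_scale[OF assms] real_scaleR_def)
    also have "\<dots> = w \<bullet> X" unfolding w_def inner_sum_left by (simp add: mult.commute inner_commute)
    finally show ?thesis using Fm_inner[of v X] v by simp
  qed
  then show ?thesis by blast
qed

lemma grad_unique:
  assumes "\<And>X. ((\<lambda>e. \<phi> (u + e *\<^sub>R X)) has_real_derivative form v X) (at 0)"
  shows "grad form \<phi> u = v"
  unfolding grad_def
proof (rule the_equality)
  show "\<forall>X. ((\<lambda>e. \<phi> (u + e *\<^sub>R X)) has_real_derivative form v X) (at 0)" using assms by blast
next
  fix v' assume "\<forall>X. ((\<lambda>e. \<phi> (u + e *\<^sub>R X)) has_real_derivative form v' X) (at 0)"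
  then have "form v' X = form v X" for X using assms DERIV_unique by blast
  then show "v' = v" by (rule form_eq_imp)
qed

lemma gradc_unique:
  assumes "\<And>X. ((\<lambda>e. \<Phi> (u + e *\<^sub>R axis j X)) has_real_derivative form v X) (at 0)"
  shows "gradc form \<Phi> u j = v"
  unfolding gradc_def
proof (rule the_equality)
  show "\<forall>X. ((\<lambda>e. \<Phi> (u + e *\<^sub>R axis j X)) has_real_derivative form v X) (at 0)" using assms by blast
next
  fix v' assume "\<forall>X. ((\<lambda>e. \<Phi> (u + e *\<^sub>R axis j X)) has_real_derivative form v' X) (at 0)"
  then have "form v' X = form v X" for X using assms DERIV_unique by blast
  then show "v' = v" by (rule form_eq_imp)
qed

lemma dir_deriv:
  assumes "(\<phi> has_derivative D) (at u)"
  shows "((\<lambda>e. \<phi> (u + e *\<^sub>R X)) has_real_derivative D X) (at 0)"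
proof -
  have lin: "linear D" using assms has_derivative_linear by blast
  have a: "((\<lambda>e. u + e *\<^sub>R X) has_derivative (\<lambda>e. e *\<^sub>R X)) (at 0)"
    by (auto intro!: derivative_eq_intros)
  have b: "(\<phi> has_derivative D) (at ((\<lambda>e. u + e *\<^sub>R X) 0))" using assms by simp
  have "((\<phi> \<circ> (\<lambda>e. u + e *\<^sub>R X)) has_derivative (D \<circ> (\<lambda>e. e *\<^sub>R X))) (at 0)"
    by (rule diff_chain_at[OF a b])
  moreover have "(D \<circ> (\<lambda>e. e *\<^sub>R X)) = (\<lambda>e. D X * e)"
    using linear_scale[OF lin] by (auto simp: fun_eq_iff)
  ultimately show ?thesis unfolding has_field_derivative_def by (simp add: o_def)
qed

lemma grad_works:
  assumes "\<phi> differentiable (at u)"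
  shows "form (grad form \<phi> u) X = frechet_derivative \<phi> (at u) X"
    and "((\<lambda>e. \<phi> (u + e *\<^sub>R X)) has_real_derivative form (grad form \<phi> u) X) (at 0)"
proof -
  let ?D = "frechet_derivative \<phi> (at u)"
  have d: "(\<phi> has_derivative ?D) (at u)" using assms frechet_derivative_works by blast
  obtain v where v: "\<forall>X. form v X = ?D X" using riesz has_derivative_linear[OF d] by blast
  have g: "grad form \<phi> u = v"
    by (rule grad_unique) (use dir_deriv[OF d] v in simp)
  show "form (grad form \<phi> u) X = ?D X" using g v by simp
  show "((\<lambda>e. \<phi> (u + e *\<^sub>R X)) has_real_derivative form (grad form \<phi> u) X) (at 0)"
    using dir_deriv[OF d] g v by simp
qed

lemma deriv_LXR:
  assumes "\<phi> differentiable (at (L * x * R))"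
  shows "((\<lambda>e. \<phi> (L * (x + e *\<^sub>R X) * R)) has_real_derivative form (R * grad form \<phi> (L * x * R) * L) X) (at 0)"
proof -
  have eq: "L * (x + e *\<^sub>R X) * R = L * x * R + e *\<^sub>R (L * X * R)" for e
    by (simp add: algebra_simps)
  show ?thesis
    using grad_works(2)[OF assms, of "L * X * R"] unfolding eq form_LXR .
qed


definition Tw :: "'a ^ 'n::enum \<Rightarrow> int \<Rightarrow> 'a" where
  "Tw u c = dprod (cmp u) (c + 1) (c + int CARD('n))"

definition aw :: "('a \<Rightarrow> real) \<Rightarrow> 'a ^ 'n::enum \<Rightarrow> int \<Rightarrow> int \<Rightarrow> 'a" where
  "aw \<phi> u c q = dprod (cmp u) (c + 1) q * grad form \<phi> (Tw u c) * dprod (cmp u) (q + 1) (c + int CARD('n))"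

lemma cmp_pert: "cmp (u + e *\<^sub>R axis k X) p = cmp u p + (if ix p = k then e *\<^sub>R X else 0)"
  unfolding cmp_def axis_def by simp

lemma Tw_split:
  fixes u :: "'a ^ 'n::enum"
  assumes q: "c + 1 \<le> q" "q \<le> c + int CARD('n)"
  shows "Tw u c = dprod (cmp u) (q + 1) (c + int CARD('n)) * cmp u q * dprod (cmp u) (c + 1) (q - 1)"
  unfolding Tw_def using dprod_split[of "c+1" q "c + int CARD('n)" "cmp u"] dprod_rec[of "c+1" q "cmp u"] q
  by (simp add: mult.assoc)

lemma Tw_pert:
  fixes u :: "'a ^ 'n::enum"
  assumes q: "c + 1 \<le> q" "q \<le> c + int CARD('n)"
  shows "Tw (u + e *\<^sub>R axis (ix q) X) c =
    dprod (cmp u) (q + 1) (c + int CARD('n)) * (cmp u q + e *\<^sub>R X) * dprod (cmp u) (c + 1) (q - 1)"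
proof -
  let ?u = "u + e *\<^sub>R axis (ix q) X"
  have ne: "(ix p :: 'n) \<noteq> ix q" if "c + 1 \<le> p" "p \<le> c + int CARD('n)" "p \<noteq> q" for p
    using inj_onD[OF ix_inj_window[where a=c, where 'n='n], of p q] that q by auto
  have 1: "dprod (cmp ?u) (q + 1) (c + int CARD('n)) = dprod (cmp u) (q + 1) (c + int CARD('n))"
    by (rule dprod_cong) (use ne q in \<open>auto simp: cmp_pert\<close>)
  have 2: "dprod (cmp ?u) (c + 1) (q - 1) = dprod (cmp u) (c + 1) (q - 1)"
    by (rule dprod_cong) (use ne q in \<open>auto simp: cmp_pert\<close>)
  show ?thesis using Tw_split[OF q, of ?u] 1 2 by (simp add: cmp_pert)
qed

lemma gradc_Tw:
  fixes u :: "'a ^ 'n::enum"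
  assumes diff: "\<And>x. \<phi> differentiable (at x)"
    and q: "c + 1 \<le> q" "q \<le> c + int CARD('n)"
  shows "gradc form (\<lambda>u. \<phi> (Tw u c)) u (ix q) =
    dprod (cmp u) (c + 1) (q - 1) * grad form \<phi> (Tw u c) * dprod (cmp u) (q + 1) (c + int CARD('n))"
proof (rule gradc_unique)
  fix X
  let ?L = "dprod (cmp u) (q + 1) (c + int CARD('n))" and ?R = "dprod (cmp u) (c + 1) (q - 1)"
  have "((\<lambda>e. \<phi> (?L * (cmp u q + e *\<^sub>R X) * ?R)) has_real_derivative
      form (?R * grad form \<phi> (?L * cmp u q * ?R) * ?L) X) (at 0)"
    by (rule deriv_LXR[OF diff])
  then show "((\<lambda>e. \<phi> (Tw (u + e *\<^sub>R axis (ix q) X) c)) has_real_derivative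
      form (?R * grad form \<phi> (Tw u c) * ?L) X) (at 0)"
    unfolding Tw_pert[OF q] Tw_split[OF q, of u, symmetric] .
qed

lemma dlc_Tw:
  fixes u :: "'a ^ 'n::enum"
  assumes diff: "\<And>x. \<phi> differentiable (at x)"
    and q: "c + 1 \<le> q" "q \<le> c + int CARD('n)"
  shows "dlc form (\<lambda>u. \<phi> (Tw u c)) u (ix q) = aw \<phi> u c q"
proof -
  have "dprod (cmp u) (c + 1) q = cmp u q * dprod (cmp u) (c + 1) (q - 1)"
    using dprod_rec[of "c+1" q] q by simp
  then show ?thesis
    unfolding dlc_def gradc_Tw[OF diff q] aw_def by (simp add: cmp_def mult.assoc)
qed

lemma drc_Tw:
  fixes u :: "'a ^ 'n::enum"
  assumes diff: "\<And>x. \<phi> differentiable (at x)"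
    and q: "c + 1 \<le> q" "q \<le> c + int CARD('n)"
  shows "drc form (\<lambda>u. \<phi> (Tw u c)) u (ix q) = aw \<phi> u c (q - 1)"
proof -
  have "dprod (cmp u) q (c + int CARD('n)) = dprod (cmp u) (q + 1) (c + int CARD('n)) * cmp u q"
    using dprod_split[of q q "c + int CARD('n)" "cmp u"] q by (simp add: dprod_single)
  then show ?thesis
    unfolding drc_def gradc_Tw[OF diff q] aw_def by (simp add: cmp_def mult.assoc)
qed

lemma aw_first: "aw \<phi> u c c = grad form \<phi> (Tw u c) * Tw u c"
  unfolding aw_def Tw_def by (simp add: dprod_empty)

lemma aw_last: "aw \<phi> (u :: 'a ^ 'n::enum) c (c + int CARD('n)) = Tw u c * grad form \<phi> (Tw u c)"
  unfolding aw_def Tw_def by (simp add: dprod_empty)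

end

lemma sum_shift1: "(\<Sum>p\<in>{a + 1..b::int}. g p) = (\<Sum>p\<in>{a..b - 1}. g (p + 1))"
  by (rule sum.reindex_bij_witness[of _ "\<lambda>p. p + 1" "\<lambda>p. p - 1"]) auto

lemma sum_restrict1: "finite Q \<Longrightarrow> S \<subseteq> Q \<Longrightarrow> sum f S = sum (\<lambda>r. if r \<in> S then f r else 0) Q"
  using sum.inter_restrict[of Q f S] by (simp add: Int_absorb1)

lemma sum_restrict2:
  assumes "finite Q" "S \<subseteq> Q" "T \<subseteq> Q"
  shows "(\<Sum>r\<in>S. \<Sum>p\<in>T. f r p) = (\<Sum>r\<in>Q. \<Sum>p\<in>Q. if r \<in> S \<and> p \<in> T then f r p else (0::'b::comm_monoid_add))"
proof -
  have "(\<Sum>r\<in>S. \<Sum>p\<in>T. f r p) = (\<Sum>r\<in>Q. if r \<in> S then (\<Sum>p\<in>T. f r p) else 0)"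
    by (rule sum_restrict1[OF assms(1,2)])
  also have "\<dots> = (\<Sum>r\<in>Q. \<Sum>p\<in>Q. if r \<in> S \<and> p \<in> T then f r p else 0)"
  proof (rule sum.cong[OF refl])
    fix r assume "r \<in> Q"
    show "(if r \<in> S then (\<Sum>p\<in>T. f r p) else 0) = (\<Sum>p\<in>Q. if r \<in> S \<and> p \<in> T then f r p else 0)"
      using sum_restrict1[OF assms(1,3), of "f r"] by auto
  qed
  finally show ?thesis .
qed

lemma sum_corners:
  assumes "finite Q" "S \<subseteq> Q" "\<And>r p. r \<in> Q \<Longrightarrow> p \<in> Q \<Longrightarrow> \<not> (r \<in> S \<and> p \<in> S) \<Longrightarrow> K r p = (0::'b::comm_monoid_add)"
  shows "(\<Sum>r\<in>Q. \<Sum>p\<in>Q. K r p) = (\<Sum>r\<in>S. \<Sum>p\<in>S. K r p)"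
proof -
  have "(\<Sum>r\<in>Q. \<Sum>p\<in>Q. K r p) = (\<Sum>r\<in>Q. \<Sum>p\<in>S. K r p)"
    by (rule sum.cong[OF refl], rule sum.mono_neutral_right) (use assms in auto)
  also have "\<dots> = (\<Sum>r\<in>S. \<Sum>p\<in>S. K r p)"
    by (rule sum.mono_neutral_right) (use assms in \<open>auto intro!: sum.neutral\<close>)
  finally show ?thesis .
qed

lemma ix_red: "(ix (i - int CARD('n) * k + c) :: 'n::enum) = ix (i + c)"
  by (simp add: ix_eq_iff mod_eq_dvd_iff)

lemma ix_norm: "\<exists>i'. 1 \<le> i' \<and> i' \<le> int CARD('n) \<and> (\<forall>c. (ix (i' + c) :: 'n::enum) = ix (i + c))"
proof -
  let ?N = "int CARD('n)"
  define i' where "i' = (i - 1) mod ?N + 1"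
  have "i' = i - ?N * ((i - 1) div ?N)" unfolding i'_def by (simp add: minus_div_mult_eq_mod[symmetric] algebra_simps)
  then have "(ix (i' + c) :: 'n) = ix (i + c)" for c using ix_red[of i "(i - 1) div ?N" c, where 'n='n] by simp
  moreover have r: "(i - 1) mod ?N < ?N" "0 \<le> (i - 1) mod ?N" by simp_all
  have "1 \<le> i'" "i' \<le> ?N" using r unfolding i'_def by linarith+
  ultimately show ?thesis by blast
qed

locale ops = frm form for form :: "'a::{real_algebra_1, euclidean_space} \<Rightarrow> 'a \<Rightarrow> real" +
  fixes A B C D :: "'n::enum \<Rightarrow> 'n \<Rightarrow> 'a \<Rightarrow> 'a"
  assumes lin: "\<And>i j. linear (A i j) \<and> linear (B i j) \<and> linear (C i j) \<and> linear (D i j)"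
    and cond_i: "\<And>i j. 1 \<le> i \<Longrightarrow> i \<le> int CARD('n) \<Longrightarrow> 1 \<le> j \<Longrightarrow> j \<le> int CARD('n) \<Longrightarrow> i \<noteq> j \<Longrightarrow>
        A (ix (i + 1)) (ix (j + 1)) = (\<lambda>x. - B (ix (i + 1)) (ix j) x) \<and>
        A (ix (i + 1)) (ix (j + 1)) = C (ix i) (ix (j + 1)) \<and>
        A (ix (i + 1)) (ix (j + 1)) = (\<lambda>x. - D (ix i) (ix j) x)"
    and cond_ii: "\<And>j x. 1 \<le> j \<Longrightarrow> j \<le> int CARD('n) \<Longrightarrow>
        A (ix (j + 1)) (ix (j + 1)) x - D (ix j) (ix j) x + B (ix (j + 1)) (ix j) x
          - C (ix j) (ix (j + 1)) x = 0"
begin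

lemma offdiag:
  assumes "(ix i :: 'n) \<noteq> ix j"
  shows "B (ix (i + 1)) (ix j) x = - A (ix (i + 1)) (ix (j + 1)) x"
    and "C (ix i) (ix (j + 1)) x = A (ix (i + 1)) (ix (j + 1)) x"
    and "D (ix i) (ix j) x = - A (ix (i + 1)) (ix (j + 1)) x"
proof -
  obtain i' where i': "1 \<le> i'" "i' \<le> int CARD('n)" "\<And>c. (ix (i' + c) :: 'n) = ix (i + c)"
    using ix_norm by blast
  obtain j' where j': "1 \<le> j'" "j' \<le> int CARD('n)" "\<And>c. (ix (j' + c) :: 'n) = ix (j + c)"
    using ix_norm by blast
  have ii: "(ix i' :: 'n) = ix i" "(ix j' :: 'n) = ix j" using i'(3)[of 0] j'(3)[of 0] by simp_all
  have "i' \<noteq> j'" using assms ii by auto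
  note c = cond_i[OF i'(1,2) j'(1,2) this]
  note c' = c[unfolded ii i'(3) j'(3)]
  from c' show "B (ix (i + 1)) (ix j) x = - A (ix (i + 1)) (ix (j + 1)) x"
    by (metis add.inverse_inverse)
  from c' show "C (ix i) (ix (j + 1)) x = A (ix (i + 1)) (ix (j + 1)) x" by metis
  from c' show "D (ix i) (ix j) x = - A (ix (i + 1)) (ix (j + 1)) x"
    by (metis add.inverse_inverse)
qed

lemma diag: "A (ix (j + 1)) (ix (j + 1)) x - D (ix j) (ix j) x + B (ix (j + 1)) (ix j) x
          - C (ix j) (ix (j + 1)) x = 0"
proof -
  obtain j' where j': "1 \<le> j'" "j' \<le> int CARD('n)" "\<And>c. (ix (j' + c) :: 'n) = ix (j + c)"
    using ix_norm by blast
  have jj: "(ix j' :: 'n) = ix j" using j'(3)[of 0] by simp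
  show ?thesis using cond_ii[OF j'(1,2), of x] unfolding jj j'(3) .
qed


definition Kf :: "(int \<Rightarrow> 'a) \<Rightarrow> (int \<Rightarrow> 'a) \<Rightarrow> int \<Rightarrow> int \<Rightarrow> int \<Rightarrow> real" where
  "Kf a b c r p =
     (if r \<in> {c..c + int CARD('n) - 1} \<and> p \<in> {c..c + int CARD('n) - 1} then form (A (ix (r + 1)) (ix (p + 1)) (a p)) (b r) else 0)
   - (if r \<in> {c + 1..c + int CARD('n)} \<and> p \<in> {c + 1..c + int CARD('n)} then form (D (ix r) (ix p) (a p)) (b r) else 0)
   + (if r \<in> {c..c + int CARD('n) - 1} \<and> p \<in> {c + 1..c + int CARD('n)} then form (B (ix (r + 1)) (ix p) (a p)) (b r) else 0)
   - (if r \<in> {c + 1..c + int CARD('n)} \<and> p \<in> {c..c + int CARD('n) - 1} then form (C (ix r) (ix (p + 1)) (a p)) (b r) else 0)"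

lemma ix_ne: "a < x \<Longrightarrow> x \<le> a + int CARD('n) \<Longrightarrow> a < y \<Longrightarrow> y \<le> a + int CARD('n) \<Longrightarrow> x \<noteq> y \<Longrightarrow> (ix x :: 'n) \<noteq> ix y"
  using inj_onD[OF ix_inj_window[where a=a, where 'n='n], of x y] by auto

lemma Kf_zero:
  assumes r: "c \<le> r" "r \<le> c + int CARD('n)" and p: "c \<le> p" "p \<le> c + int CARD('n)"
    and nc: "\<not> (r \<in> {c, c + int CARD('n)} \<and> p \<in> {c, c + int CARD('n)})"
  shows "Kf a b c r p = 0"
proof -
  let ?N = "int CARD('n)"
  have N: "?N \<ge> 1" by simp
  have rc: "r = c \<or> r = c + ?N \<or> (c < r \<and> r < c + ?N)" using r by linarith
  have pc: "p = c \<or> p = c + ?N \<or> (c < p \<and> p < c + ?N)" using p by linarith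
  from rc pc nc consider (II) "c < r" "r < c + ?N" "c < p" "p < c + ?N"
    | (IC) "c < r" "r < c + ?N" "p = c"
    | (IN) "c < r" "r < c + ?N" "p = c + ?N"
    | (CI) "r = c" "c < p" "p < c + ?N"
    | (NI) "r = c + ?N" "c < p" "p < c + ?N"
    by blast
  then show ?thesis
  proof cases
    case II
    show ?thesis
    proof (cases "r = p")
      case True
      have "form (A (ix (r + 1)) (ix (r + 1)) (a r) - D (ix r) (ix r) (a r) + B (ix (r + 1)) (ix r) (a r)
          - C (ix r) (ix (r + 1)) (a r)) (b r) = 0"
        using diag[of r "a r"] linear_0[OF lin1] by simp
      then show ?thesis using II True unfolding Kf_def by (simp add: form_add1 form_diff1)
    next
      case False
      then have ne: "(ix r :: 'n) \<noteq> ix p" using ix_ne[of c r p] II by simp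
      have m: "r \<in> {c..c + ?N - 1}" "p \<in> {c..c + ?N - 1}" "r \<in> {c + 1..c + ?N}" "p \<in> {c + 1..c + ?N}"
        using II by auto
      show ?thesis unfolding Kf_def using m by (simp only: if_True simp_thms offdiag[OF ne] form_neg1, simp?)
    qed
  next
    case IC
    then have ne: "(ix r :: 'n) \<noteq> ix p" using ix_ne[of "c - 1" r p] by simp
    have m: "r \<in> {c..c + ?N - 1}" "p \<in> {c..c + ?N - 1}" "r \<in> {c + 1..c + ?N}" "p \<notin> {c + 1..c + ?N}"
      using IC by auto
    show ?thesis unfolding Kf_def using m by (simp only: if_True if_False simp_thms offdiag[OF ne] form_neg1, simp?)
  next
    case IN
    then have ne: "(ix r :: 'n) \<noteq> ix p" using ix_ne[of c r p] by simp
    have m: "r \<in> {c..c + ?N - 1}" "p \<notin> {c..c + ?N - 1}" "r \<in> {c + 1..c + ?N}" "p \<in> {c + 1..c + ?N}"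
      using IN by auto
    show ?thesis unfolding Kf_def using m by (simp only: if_True if_False simp_thms offdiag[OF ne] form_neg1, simp?)
  next
    case CI
    then have ne: "(ix r :: 'n) \<noteq> ix p" using ix_ne[of "c - 1" r p] by simp
    have m: "r \<in> {c..c + ?N - 1}" "p \<in> {c..c + ?N - 1}" "r \<notin> {c + 1..c + ?N}" "p \<in> {c + 1..c + ?N}"
      using CI by auto
    show ?thesis unfolding Kf_def using m by (simp only: if_True if_False simp_thms offdiag[OF ne] form_neg1, simp?)
  next
    case NI
    then have ne: "(ix r :: 'n) \<noteq> ix p" using ix_ne[of c r p] by simp
    have m: "r \<notin> {c..c + ?N - 1}" "p \<in> {c..c + ?N - 1}" "r \<in> {c + 1..c + ?N}" "p \<in> {c + 1..c + ?N}"
      using NI by auto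
    show ?thesis unfolding Kf_def using m by (simp only: if_True if_False simp_thms offdiag[OF ne] form_neg1, simp?)
  qed
qed


lemma part1_Tw:
  fixes u :: "('a, 'n) vec" and c :: int
  assumes dphi: "\<And>x. \<phi> differentiable (at x)" and dpsi: "\<And>x. \<psi> differentiable (at x)"
  shows "PBn form A B C D (\<lambda>u. \<phi> (Tw u c)) (\<lambda>u. \<psi> (Tw u c)) u =
    PB form (A (ix (c + 1)) (ix (c + 1))) (B (ix (c + 1)) (ix c)) (C (ix c) (ix (c + 1))) (D (ix c) (ix c))
       \<phi> \<psi> (Tw u c)"
proof -
  let ?N = "int CARD('n)"
  define W where "W = {c + 1..c + ?N}"
  define W' where "W' = {c..c + ?N - 1}"
  define Q where "Q = {c..c + ?N}"
  define a where "a = aw \<phi> u c"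
  define b where "b = aw \<psi> u c"
  define \<Phi> where "\<Phi> = (\<lambda>v :: ('a, 'n) vec. \<phi> (Tw v c))"
  define \<Psi> where "\<Psi> = (\<lambda>v :: ('a, 'n) vec. \<psi> (Tw v c))"
  define t1 where "t1 r p = form (A (ix r) (ix p) (a (p - 1))) (b (r - 1))" for r p
  define t2 where "t2 r p = form (D (ix r) (ix p) (a p)) (b r)" for r p
  define t3 where "t3 r p = form (B (ix r) (ix p) (a p)) (b (r - 1))" for r p
  define t4 where "t4 r p = form (C (ix r) (ix p) (a (p - 1))) (b r)" for r p
  have fin: "finite Q" unfolding Q_def by simp
  have sub: "W \<subseteq> Q" "W' \<subseteq> Q" unfolding W_def W'_def Q_def by auto
  have S1: "PBn form A B C D \<Phi> \<Psi> u = (\<Sum>r\<in>W. \<Sum>p\<in>W. t1 r p - t2 r p + t3 r p - t4 r p)"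
  proof -
    have "PBn form A B C D \<Phi> \<Psi> u = (\<Sum>r\<in>W. \<Sum>p\<in>W.
        form (A (ix r) (ix p) (drc form \<Phi> u (ix p))) (drc form \<Psi> u (ix r))
      - form (D (ix r) (ix p) (dlc form \<Phi> u (ix p))) (dlc form \<Psi> u (ix r))
      + form (B (ix r) (ix p) (dlc form \<Phi> u (ix p))) (drc form \<Psi> u (ix r))
      - form (C (ix r) (ix p) (drc form \<Phi> u (ix p))) (dlc form \<Psi> u (ix r)))"
      unfolding PBn_def W_def by (simp only: sum_UNIV_window[where a=c])
    also have "\<dots> = (\<Sum>r\<in>W. \<Sum>p\<in>W. t1 r p - t2 r p + t3 r p - t4 r p)"
    proof (intro sum.cong refl)
      fix r p assume r: "r \<in> W" and p: "p \<in> W"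
      have r': "c + 1 \<le> r" "r \<le> c + ?N" and p': "c + 1 \<le> p" "p \<le> c + ?N" using r p unfolding W_def by auto
      show "form (A (ix r) (ix p) (drc form \<Phi> u (ix p))) (drc form \<Psi> u (ix r))
      - form (D (ix r) (ix p) (dlc form \<Phi> u (ix p))) (dlc form \<Psi> u (ix r))
      + form (B (ix r) (ix p) (dlc form \<Phi> u (ix p))) (drc form \<Psi> u (ix r))
      - form (C (ix r) (ix p) (drc form \<Phi> u (ix p))) (dlc form \<Psi> u (ix r)) = t1 r p - t2 r p + t3 r p - t4 r p"
        unfolding t1_def t2_def t3_def t4_def \<Phi>_def \<Psi>_def a_def b_def
        by (simp only: dlc_Tw[OF dphi r'] dlc_Tw[OF dpsi r'] drc_Tw[OF dphi r'] drc_Tw[OF dpsi r']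
            dlc_Tw[OF dphi p'] dlc_Tw[OF dpsi p'] drc_Tw[OF dphi p'] drc_Tw[OF dpsi p'])
    qed
    finally show ?thesis .
  qed
  have S2: "(\<Sum>r\<in>W. \<Sum>p\<in>W. t1 r p - t2 r p + t3 r p - t4 r p) =
      (\<Sum>r\<in>W. \<Sum>p\<in>W. t1 r p) - (\<Sum>r\<in>W. \<Sum>p\<in>W. t2 r p) + (\<Sum>r\<in>W. \<Sum>p\<in>W. t3 r p) - (\<Sum>r\<in>W. \<Sum>p\<in>W. t4 r p)"
    by (simp add: sum.distrib sum_subtractf)
  have shW: "(\<Sum>r\<in>W. g r) = (\<Sum>r\<in>W'. g (r + 1))" for g :: "int \<Rightarrow> real"
    unfolding W_def W'_def using sum_shift1[of g c "c + ?N"] by simp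
  have T1: "(\<Sum>r\<in>W. \<Sum>p\<in>W. t1 r p) = (\<Sum>r\<in>Q. \<Sum>p\<in>Q.
      if r \<in> W' \<and> p \<in> W' then form (A (ix (r + 1)) (ix (p + 1)) (a p)) (b r) else 0)"
  proof -
    have "(\<Sum>r\<in>W. \<Sum>p\<in>W. t1 r p) = (\<Sum>r\<in>W'. \<Sum>p\<in>W'. t1 (r + 1) (p + 1))"
      using shW by simp
    also have "\<dots> = (\<Sum>r\<in>W'. \<Sum>p\<in>W'. form (A (ix (r + 1)) (ix (p + 1)) (a p)) (b r))"
      unfolding t1_def by simp
    finally show ?thesis by (rule trans[OF _ sum_restrict2[OF fin sub(2) sub(2)]])
  qed
  have T2: "(\<Sum>r\<in>W. \<Sum>p\<in>W. t2 r p) = (\<Sum>r\<in>Q. \<Sum>p\<in>Q.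
      if r \<in> W \<and> p \<in> W then form (D (ix r) (ix p) (a p)) (b r) else 0)"
    unfolding t2_def by (rule sum_restrict2[OF fin sub(1) sub(1)])
  have T3: "(\<Sum>r\<in>W. \<Sum>p\<in>W. t3 r p) = (\<Sum>r\<in>Q. \<Sum>p\<in>Q.
      if r \<in> W' \<and> p \<in> W then form (B (ix (r + 1)) (ix p) (a p)) (b r) else 0)"
  proof -
    have "(\<Sum>r\<in>W. \<Sum>p\<in>W. t3 r p) = (\<Sum>r\<in>W'. \<Sum>p\<in>W. t3 (r + 1) p)"
      using shW by simp
    also have "\<dots> = (\<Sum>r\<in>W'. \<Sum>p\<in>W. form (B (ix (r + 1)) (ix p) (a p)) (b r))"
      unfolding t3_def by simp
    finally show ?thesis by (rule trans[OF _ sum_restrict2[OF fin sub(2) sub(1)]])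
  qed
  have T4: "(\<Sum>r\<in>W. \<Sum>p\<in>W. t4 r p) = (\<Sum>r\<in>Q. \<Sum>p\<in>Q.
      if r \<in> W \<and> p \<in> W' then form (C (ix r) (ix (p + 1)) (a p)) (b r) else 0)"
  proof -
    have "(\<Sum>r\<in>W. \<Sum>p\<in>W. t4 r p) = (\<Sum>r\<in>W. \<Sum>p\<in>W'. t4 r (p + 1))"
      using shW by simp
    also have "\<dots> = (\<Sum>r\<in>W. \<Sum>p\<in>W'. form (C (ix r) (ix (p + 1)) (a p)) (b r))"
      unfolding t4_def by simp
    finally show ?thesis by (rule trans[OF _ sum_restrict2[OF fin sub(1) sub(2)]])
  qed
  have S3: "PBn form A B C D \<Phi> \<Psi> u = (\<Sum>r\<in>Q. \<Sum>p\<in>Q. Kf a b c r p)"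
    unfolding S1 S2 T1 T2 T3 T4 unfolding Kf_def W_def W'_def
    by (simp add: sum.distrib sum_subtractf)
  have S4: "(\<Sum>r\<in>Q. \<Sum>p\<in>Q. Kf a b c r p) = (\<Sum>r\<in>{c, c + ?N}. \<Sum>p\<in>{c, c + ?N}. Kf a b c r p)"
    by (rule sum_corners[OF fin]) (auto simp: Q_def intro!: Kf_zero)
  have cN: "c \<noteq> c + ?N" by simp
  have S5: "(\<Sum>r\<in>{c, c + ?N}. \<Sum>p\<in>{c, c + ?N}. Kf a b c r p) =
     Kf a b c c c + Kf a b c c (c + ?N) + Kf a b c (c + ?N) c + Kf a b c (c + ?N) (c + ?N)"
    using cN by simp
  have per: "(ix (c + ?N) :: 'n) = ix c" by (rule ix_periodic)
  have K1: "Kf a b c c c = form (A (ix (c + 1)) (ix (c + 1)) (a c)) (b c)"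
    unfolding Kf_def by simp
  have K2: "Kf a b c c (c + ?N) = form (B (ix (c + 1)) (ix c) (a (c + ?N))) (b c)"
    unfolding Kf_def per by simp
  have K3: "Kf a b c (c + ?N) c = - form (C (ix c) (ix (c + 1)) (a c)) (b (c + ?N))"
    unfolding Kf_def per by simp
  have K4: "Kf a b c (c + ?N) (c + ?N) = - form (D (ix c) (ix c) (a (c + ?N))) (b (c + ?N))"
    unfolding Kf_def per by simp
  have "PBn form A B C D \<Phi> \<Psi> u = Kf a b c c c + Kf a b c c (c + ?N) + Kf a b c (c + ?N) c + Kf a b c (c + ?N) (c + ?N)"
    using S3 S4 S5 by simp
  then show ?thesis
    unfolding \<Phi>_def \<Psi>_def K1 K2 K3 K4 unfolding PB_def a_def b_def
    unfolding aw_first aw_last dl_def dr_def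
    by simp
qed

end

lemma vec_decomp: "(x :: ('b::comm_monoid_add, 'n::finite) vec) = (\<Sum>k\<in>UNIV. axis k (x $ k))"
  by (simp add: vec_eq_iff axis_def)

lemma sum_cyc:
  fixes g :: "int \<Rightarrow> 'b::comm_monoid_add"
  assumes N: "1 \<le> N" and g: "g 0 = g N"
  shows "(\<Sum>p\<in>{1..N}. g p) = (\<Sum>p\<in>{1..N}. g (p - 1))"
proof -
  have "(\<Sum>p\<in>{0 + 1..N}. g (p - 1)) = (\<Sum>p\<in>{0..N - 1}. g (p + 1 - 1))"
    by (rule sum_shift1)
  then have e1: "(\<Sum>p\<in>{1..N}. g (p - 1)) = (\<Sum>p\<in>{0..N - 1}. g p)" by simp
  have s1: "{0..N - 1} = insert 0 {1..N - 1}" using N by auto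
  have s2: "{1..N} = insert N {1..N - 1}" using N by auto
  have e2: "(\<Sum>p\<in>{1..N}. g p) = (\<Sum>p\<in>{0..N - 1}. g p)" unfolding s1 s2 using g by simp
  show ?thesis using e1 e2 by simp
qed

lemma linear_axis: "linear (axis k :: 'b::real_vector \<Rightarrow> ('b, 'n::finite) vec)"
  by (rule linearI) (simp_all add: axis_def vec_eq_iff)

context frm
begin

lemma gradc_linear:
  assumes l: "linear l"
  shows "form (gradc form l u k) X = l (axis k X)"
proof -
  have lin: "linear (\<lambda>X. l (axis k X))"
    using linear_compose[OF linear_axis l] by (simp add: o_def)
  obtain w where w: "\<forall>X. form w X = l (axis k X)" using riesz[OF lin] by blast
  have "gradc form l u k = w"
  proof (rule gradc_unique)
    fix X
    have eq: "(\<lambda>e. l (u + e *\<^sub>R axis k X)) = (\<lambda>e. l u + e * l (axis k X))"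
      using linear_add[OF l] linear_scale[OF l] by (simp add: fun_eq_iff)
    show "((\<lambda>e. l (u + e *\<^sub>R axis k X)) has_real_derivative form w X) (at 0)"
      unfolding eq w[rule_format] by (auto intro!: derivative_eq_intros)
  qed
  then show ?thesis using w by simp
qed

end

context ops
begin

definition Lf :: "('a \<Rightarrow> real) \<Rightarrow> ('a, 'n) vec \<Rightarrow> int \<Rightarrow> 'a" where
  "Lf \<phi> u j = A (ix (j + 1)) (ix (j + 1)) (dl form \<phi> (Tj u j)) + B (ix (j + 1)) (ix j) (dl form \<phi> (Tj u j))"

definition Vf :: "('a \<Rightarrow> real) \<Rightarrow> ('a, 'n) vec \<Rightarrow> ('a, 'n) vec" where
  "Vf \<phi> u = (\<chi> k. cmp u (pos k) * Lf \<phi> u (pos k - 1) - Lf \<phi> u (pos k) * cmp u (pos k))"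

lemma aw_Tj:
  fixes u :: "('a, 'n) vec"
  assumes adl: "\<And>h k. h * grad form \<phi> (k * h) * k = h * k * grad form \<phi> (h * k)"
    and q: "0 \<le> q" "q \<le> int CARD('n)"
  shows "aw \<phi> u 0 q = dl form \<phi> (Tj u q)"
proof -
  have "Tw u 0 = dprod (cmp u) (q + 1) (int CARD('n)) * dprod (cmp u) 1 q"
    unfolding Tw_def using dprod_split[of 1 q "int CARD('n)" "cmp u"] q by simp
  then show ?thesis unfolding aw_def dl_def Tj_def using adl by simp
qed

lemma part2_sum:
  fixes u :: "('a, 'n) vec"
  assumes dphi: "\<And>x. \<phi> differentiable (at x)"
    and adl: "\<And>h k. h * grad form \<phi> (k * h) * k = h * k * grad form \<phi> (h * k)"
    and l: "linear l"
  shows "PBn form A B C D (\<lambda>v. \<phi> (Mon v)) l u = l (Vf \<phi> u)"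
proof -
  let ?N = "int CARD('n)"
  have N1: "1 \<le> ?N" by simp
  define W where "W = {1..?N}"
  define a where "a = aw \<phi> u 0"
  define w where "w k = gradc form l u k" for k
  define X where "X r = (\<Sum>p\<in>W. A (ix r) (ix p) (a (p - 1)) + B (ix r) (ix p) (a p))" for r
  define Y where "Y r = (\<Sum>p\<in>W. D (ix r) (ix p) (a p) + C (ix r) (ix p) (a (p - 1)))" for r
  have MT: "(\<lambda>v. \<phi> (Mon v)) = (\<lambda>v :: ('a, 'n) vec. \<phi> (Tw v 0))"
    unfolding Mon_def Tw_def by simp
  have P1: "PBn form A B C D (\<lambda>v. \<phi> (Mon v)) l u = (\<Sum>r\<in>W. \<Sum>p\<in>W.
        form (A (ix r) (ix p) (a (p - 1))) (w (ix r) * cmp u r)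
      - form (D (ix r) (ix p) (a p)) (cmp u r * w (ix r))
      + form (B (ix r) (ix p) (a p)) (w (ix r) * cmp u r)
      - form (C (ix r) (ix p) (a (p - 1))) (cmp u r * w (ix r)))"
  proof -
    have "PBn form A B C D (\<lambda>v. \<phi> (Mon v)) l u = (\<Sum>r\<in>W. \<Sum>p\<in>W.
        form (A (ix r) (ix p) (drc form (\<lambda>v. \<phi> (Tw v 0)) u (ix p))) (drc form l u (ix r))
      - form (D (ix r) (ix p) (dlc form (\<lambda>v. \<phi> (Tw v 0)) u (ix p))) (dlc form l u (ix r))
      + form (B (ix r) (ix p) (dlc form (\<lambda>v. \<phi> (Tw v 0)) u (ix p))) (drc form l u (ix r))
      - form (C (ix r) (ix p) (drc form (\<lambda>v. \<phi> (Tw v 0)) u (ix p))) (dlc form l u (ix r)))"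
      unfolding PBn_def W_def MT by (simp only: sum_UNIV_window[where a=0, where 'n='n, simplified])
    also have "\<dots> = (\<Sum>r\<in>W. \<Sum>p\<in>W.
        form (A (ix r) (ix p) (a (p - 1))) (w (ix r) * cmp u r)
      - form (D (ix r) (ix p) (a p)) (cmp u r * w (ix r))
      + form (B (ix r) (ix p) (a p)) (w (ix r) * cmp u r)
      - form (C (ix r) (ix p) (a (p - 1))) (cmp u r * w (ix r)))"
    proof (intro sum.cong refl)
      fix r p assume r: "r \<in> W" and p: "p \<in> W"
      have p': "0 + 1 \<le> p" "p \<le> 0 + ?N" using p unfolding W_def by auto
      show "form (A (ix r) (ix p) (drc form (\<lambda>v. \<phi> (Tw v 0)) u (ix p))) (drc form l u (ix r))
      - form (D (ix r) (ix p) (dlc form (\<lambda>v. \<phi> (Tw v 0)) u (ix p))) (dlc form l u (ix r))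
      + form (B (ix r) (ix p) (dlc form (\<lambda>v. \<phi> (Tw v 0)) u (ix p))) (drc form l u (ix r))
      - form (C (ix r) (ix p) (drc form (\<lambda>v. \<phi> (Tw v 0)) u (ix p))) (dlc form l u (ix r)) =
        form (A (ix r) (ix p) (a (p - 1))) (w (ix r) * cmp u r)
      - form (D (ix r) (ix p) (a p)) (cmp u r * w (ix r))
      + form (B (ix r) (ix p) (a p)) (w (ix r) * cmp u r)
      - form (C (ix r) (ix p) (a (p - 1))) (cmp u r * w (ix r))"
        unfolding a_def w_def dlc_Tw[OF dphi p'] drc_Tw[OF dphi p']
        by (simp only: dlc_def drc_def cmp_def)
    qed
    finally show ?thesis .
  qed
  have P2: "(\<Sum>p\<in>W.
        form (A (ix r) (ix p) (a (p - 1))) (w (ix r) * cmp u r)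
      - form (D (ix r) (ix p) (a p)) (cmp u r * w (ix r))
      + form (B (ix r) (ix p) (a p)) (w (ix r) * cmp u r)
      - form (C (ix r) (ix p) (a (p - 1))) (cmp u r * w (ix r)))
     = form (w (ix r)) (cmp u r * X r - Y r * cmp u r)" for r
  proof -
    have e: "\<And>x. form x (w (ix r) * cmp u r) = form (w (ix r)) (cmp u r * x)" by (rule form_wu)
    have f: "\<And>x. form x (cmp u r * w (ix r)) = form (w (ix r)) (x * cmp u r)" by (rule form_uw)
    show ?thesis unfolding X_def Y_def e f
    by (simp add: form_diff2 form_add2 form_sum2 sum_distrib_left sum_distrib_right
        distrib_left distrib_right sum.distrib sum_subtractf)
  qed
  have a0N: "a 0 = a ?N"
  proof -
    have "grad form \<phi> (Tw u 0) * Tw u 0 = Tw u 0 * grad form \<phi> (Tw u 0)"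
      using adl[of 1 "Tw u 0"] by simp
    then show ?thesis unfolding a_def using aw_first[of \<phi> u 0] aw_last[of \<phi> u 0] by simp
  qed
  have finW: "finite W" unfolding W_def by simp
  have P3: "X r = Lf \<phi> u (r - 1)" if r: "r \<in> W" for r
  proof -
    have r': "1 \<le> r" "r \<le> ?N" using r unfolding W_def by auto
    have cyc: "(\<Sum>p\<in>W. B (ix r) (ix p) (a p)) = (\<Sum>p\<in>W. B (ix r) (ix (p - 1)) (a (p - 1)))"
      unfolding W_def
    proof (rule sum_cyc[OF N1])
      have "(ix 0 :: 'n) = ix ?N" using ix_periodic[of 0, where 'n='n] by simp
      then show "B (ix r) (ix 0) (a 0) = B (ix r) (ix ?N) (a ?N)" using a0N by simp
    qed
    define F where "F p = A (ix r) (ix p) (a (p - 1)) + B (ix r) (ix (p - 1)) (a (p - 1))" for p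
    have "X r = (\<Sum>p\<in>W. F p)"
      unfolding X_def F_def sum.distrib cyc ..
    also have "\<dots> = F r + (\<Sum>p\<in>W - {r}. F p)"
      using sum.remove[OF finW r] .
    also have "(\<Sum>p\<in>W - {r}. F p) = 0"
    proof (rule sum.neutral, rule ballI)
      fix p assume p: "p \<in> W - {r}"
      have p': "1 \<le> p" "p \<le> ?N" "p \<noteq> r" using p unfolding W_def by auto
      have ne: "(ix (r - 1) :: 'n) \<noteq> ix (p - 1)" using ix_ne[of "-1" "r - 1" "p - 1"] r' p' by simp
      show "F p = 0" unfolding F_def using offdiag(1)[OF ne, of "a (p - 1)"] by simp
    qed
    finally have "X r = F r" by simp
    moreover have "a (r - 1) = dl form \<phi> (Tj u (r - 1))"
      unfolding a_def by (rule aw_Tj[OF adl]) (use r' in simp_all)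
    ultimately show ?thesis unfolding F_def Lf_def by simp
  qed
  have P4: "Y r = Lf \<phi> u r" if r: "r \<in> W" for r
  proof -
    have r': "1 \<le> r" "r \<le> ?N" using r unfolding W_def by auto
    have cyc: "(\<Sum>p\<in>W. C (ix r) (ix (p + 1)) (a p)) = (\<Sum>p\<in>W. C (ix r) (ix (p - 1 + 1)) (a (p - 1)))"
      unfolding W_def
    proof (rule sum_cyc[OF N1])
      have "(ix 1 :: 'n) = ix (?N + 1)" using ix_periodic[of 1, where 'n='n] by (simp add: add.commute)
      then show "C (ix r) (ix (0 + 1)) (a 0) = C (ix r) (ix (?N + 1)) (a ?N)" using a0N by simp
    qed
    define F where "F p = D (ix r) (ix p) (a p) + C (ix r) (ix (p + 1)) (a p)" for p
    have "Y r = (\<Sum>p\<in>W. F p)"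
      unfolding Y_def F_def sum.distrib cyc by simp
    also have "\<dots> = F r + (\<Sum>p\<in>W - {r}. F p)"
      using sum.remove[OF finW r] .
    also have "(\<Sum>p\<in>W - {r}. F p) = 0"
    proof (rule sum.neutral, rule ballI)
      fix p assume p: "p \<in> W - {r}"
      have p': "1 \<le> p" "p \<le> ?N" "p \<noteq> r" using p unfolding W_def by auto
      have ne: "(ix r :: 'n) \<noteq> ix p" using ix_ne[of 0 r p] r' p' by simp
      show "F p = 0" unfolding F_def using offdiag(2,3)[OF ne, of "a p"] by simp
    qed
    finally have "Y r = F r" by simp
    moreover have "a r = dl form \<phi> (Tj u r)"
      unfolding a_def by (rule aw_Tj[OF adl]) (use r' in simp_all)
    moreover have "A (ix (r + 1)) (ix (r + 1)) (a r) + B (ix (r + 1)) (ix r) (a r)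
        = D (ix r) (ix r) (a r) + C (ix r) (ix (r + 1)) (a r)"
      using diag[of r "a r"] by (simp add: algebra_simps)
    ultimately show ?thesis unfolding F_def Lf_def by simp
  qed
  have P5: "l (Vf \<phi> u) = (\<Sum>r\<in>W. form (w (ix r)) (cmp u r * Lf \<phi> u (r - 1) - Lf \<phi> u r * cmp u r))"
  proof -
    have "l (Vf \<phi> u) = (\<Sum>k\<in>UNIV. l (axis k (Vf \<phi> u $ k)))"
      by (subst vec_decomp[of "Vf \<phi> u"]) (simp add: linear_sum[OF l])
    also have "\<dots> = (\<Sum>k\<in>UNIV. form (w k) (Vf \<phi> u $ k))"
      unfolding w_def gradc_linear[OF l] ..
    also have "\<dots> = (\<Sum>r\<in>W. form (w (ix r)) (Vf \<phi> u $ ix r))"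
      unfolding W_def using sum_UNIV_window[where a=0, where 'n='n] by simp
    also have "\<dots> = (\<Sum>r\<in>W. form (w (ix r)) (cmp u r * Lf \<phi> u (r - 1) - Lf \<phi> u r * cmp u r))"
      by (intro sum.cong refl) (simp add: Vf_def W_def pos_ix)
    finally show ?thesis .
  qed
  show ?thesis unfolding P1 P2 P5 by (intro sum.cong refl) (simp add: P3 P4)
qed

end

lemma eig_finite:
  fixes f :: "'b::euclidean_space \<Rightarrow> 'b"
  assumes lf: "linear f"
  shows "finite {t. \<exists>v. v \<noteq> 0 \<and> f v = t *\<^sub>R v}"
proof (rule ccontr)
  define E where "E = {t. \<exists>v. v \<noteq> 0 \<and> f v = t *\<^sub>R v}"
  assume inf: "infinite {t. \<exists>v. v \<noteq> 0 \<and> f v = t *\<^sub>R v}"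
  define ev where "ev t = (SOME v. v \<noteq> 0 \<and> f v = t *\<^sub>R v)" for t
  have ev: "ev t \<noteq> 0 \<and> f (ev t) = t *\<^sub>R ev t" if "t \<in> E" for t
    unfolding ev_def by (rule someI_ex) (use that E_def in auto)
  have indep: "\<forall>c. (\<Sum>t\<in>S. c t *\<^sub>R ev t) = 0 \<longrightarrow> (\<forall>t\<in>S. c t = 0)"
    if "finite S" "S \<subseteq> E" for S
    using that
  proof (induction S rule: finite_induct)
    case empty then show ?case by simp
  next
    case (insert s S)
    show ?case
    proof (intro allI impI)
      fix c assume sum0: "(\<Sum>t\<in>insert s S. c t *\<^sub>R ev t) = 0"
      have sS: "S \<subseteq> E" "s \<in> E" using insert by auto
      have e1: "c s *\<^sub>R ev s + (\<Sum>t\<in>S. c t *\<^sub>R ev t) = 0"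
        using sum0 insert by simp
      have "f (c s *\<^sub>R ev s + (\<Sum>t\<in>S. c t *\<^sub>R ev t)) = 0"
        using e1 linear_0[OF lf] by simp
      then have e2': "(c s * s) *\<^sub>R ev s + (\<Sum>t\<in>S. c t *\<^sub>R f (ev t)) = 0"
        using ev sS by (simp add: linear_add[OF lf] linear_sum[OF lf] linear_scale[OF lf])
      have "(\<Sum>t\<in>S. c t *\<^sub>R f (ev t)) = (\<Sum>t\<in>S. (c t * t) *\<^sub>R ev t)"
        by (rule sum.cong) (use ev sS in auto)
      then have e2: "(c s * s) *\<^sub>R ev s + (\<Sum>t\<in>S. (c t * t) *\<^sub>R ev t) = 0"
        using e2' by simp
      have e3: "(c s * s) *\<^sub>R ev s + (\<Sum>t\<in>S. (c t * s) *\<^sub>R ev t) = 0"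
        using arg_cong[OF e1, of "\<lambda>x. s *\<^sub>R x"]
        by (simp add: scaleR_add_right scaleR_sum_right algebra_simps)
      have "(\<Sum>t\<in>S. (c t * (t - s)) *\<^sub>R ev t) = 0"
        using arg_cong2[OF e2 e3, of "(-)"]
        by (simp add: sum_subtractf[symmetric] algebra_simps)
      then have "\<forall>t\<in>S. c t * (t - s) = 0"
        using insert.IH[OF sS(1), rule_format, of "\<lambda>t. c t * (t - s)"] by simp
      then have cS: "\<forall>t\<in>S. c t = 0" using insert.hyps by auto
      then have "c s *\<^sub>R ev s = 0" using e1 by simp
      then have "c s = 0" using ev sS by simp
      then show "\<forall>t\<in>insert s S. c t = 0" using cS by simp
    qed
  qed
  obtain S where S: "finite S" "card S = DIM('b) + 1" "S \<subseteq> E"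
    using infinite_arbitrarily_large[OF inf[folded E_def]] by blast
  have inj: "inj_on ev S"
  proof
    fix x y assume "x \<in> S" "y \<in> S" "ev x = ev y"
    then have "x *\<^sub>R ev x = y *\<^sub>R ev x" "ev x \<noteq> 0" using ev S(3) by (metis subsetD)+
    then show "x = y" by (simp add: scaleR_cancel_right)
  qed
  have "independent (ev ` S)"
  proof
    assume "dependent (ev ` S)"
    then obtain u where u: "\<exists>v\<in>ev ` S. u v \<noteq> 0" "(\<Sum>v\<in>ev ` S. u v *\<^sub>R v) = 0"
      using real_vector.dependent_finite[of "ev ` S"] S(1) by blast
    have "(\<Sum>t\<in>S. u (ev t) *\<^sub>R ev t) = 0"
      using u(2) sum.reindex[OF inj, of "\<lambda>v. u v *\<^sub>R v"] by (simp add: o_def)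
    then have "\<forall>t\<in>S. u (ev t) = 0" using indep[OF S(1,3), rule_format, of "\<lambda>t. u (ev t)"] by simp
    then show False using u(1) by auto
  qed
  then have "card (ev ` S) \<le> DIM('b)" by (rule independent_card_le)
  then show False using card_image[OF inj] S(2) by simp
qed

context frm
begin

lemma mult_bilinear: "bilinear ((*) :: 'a \<Rightarrow> 'a \<Rightarrow> 'a)"
  unfolding bilinear_def by (auto intro!: linearI simp: distrib_left distrib_right)

lemma invertible_near:
  fixes y :: 'a
  shows "\<exists>\<delta>>0. \<forall>t. 0 < t \<and> t < \<delta> \<longrightarrow> (\<exists>z. (y + of_real t) * z = 1 \<and> z * (y + of_real t) = 1)"
proof -
  have ly: "linear (\<lambda>v. y * v)" by (auto intro!: linearI simp: distrib_left)
  define E where "E = {t. \<exists>v. v \<noteq> 0 \<and> y * v = t *\<^sub>R v}"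
  have finE: "finite E" unfolding E_def by (rule eig_finite[OF ly])
  define P where "P = uminus ` (E \<inter> {..<0})"
  have finP: "finite P" unfolding P_def using finE by simp
  have Ppos: "\<forall>p\<in>P. 0 < p" unfolding P_def by auto
  define \<delta> where "\<delta> = (if P = {} then 1 else Min P)"
  have dpos: "\<delta> > 0" unfolding \<delta>_def using finP Ppos by auto
  have "\<exists>z. (y + of_real t) * z = 1 \<and> z * (y + of_real t) = 1" if t: "0 < t" "t < \<delta>" for t
  proof -
    let ?s = "y + of_real t :: 'a"
    have lM: "linear (\<lambda>v. ?s * v)" by (auto intro!: linearI simp: distrib_left)
    have "- t \<notin> E"
    proof
      assume "- t \<in> E"
      then have "t \<in> P" unfolding P_def using t by (auto intro!: image_eqI[of _ _ "- t"])
      then have "\<delta> \<le> t" unfolding \<delta>_def using finP by auto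
      then show False using t by simp
    qed
    then have inj0: "v = 0" if "?s * v = 0" for v
    proof -
      have "y * v = (- t) *\<^sub>R v" using that by (simp add: distrib_right scaleR_conv_of_real eq_neg_iff_add_eq_0)
      then show ?thesis using \<open>- t \<notin> E\<close> unfolding E_def by blast
    qed
    have inj: "inj (\<lambda>v. ?s * v)"
      using linear_injective_0[OF lM] inj0 by blast
    have "surj (\<lambda>v. ?s * v)" using linear_injective_imp_surjective[OF lM inj] by simp
    then obtain z where z: "?s * z = 1" by (metis surjD)
    have "(\<lambda>v. ?s * v) (z * ?s) = (\<lambda>v. ?s * v) 1" using z by (simp add: mult.assoc[symmetric])
    from injD[OF inj this] have "z * ?s = 1" .
    then show ?thesis using z by blast
  qed
  then show ?thesis using dpos by blast
qed


lemma smooth_diff: "smooth \<phi> \<Longrightarrow> \<phi> differentiable (at x)"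
proof -
  assume "smooth \<phi>"
  then have "Ck (Suc 0) \<phi>" unfolding smooth_def by blast
  then show ?thesis by simp
qed

lemma grad_cont:
  assumes sm: "smooth \<phi>"
  shows "isCont (grad form \<phi>) x"
proof -
  have C2: "Ck (Suc (Suc 0)) \<phi>" using sm unfolding smooth_def by blast
  then have dif: "\<And>y. \<phi> differentiable (at y)"
    and dfd: "\<And>b y. b \<in> Basis \<Longrightarrow> (\<lambda>y. frechet_derivative \<phi> (at y) b) differentiable (at y)"
    by auto
  obtain g where g: "linear g" "g \<circ> Fm = id"
    using real_vector.linear_injective_left_inverse[OF Fm_linear Fm_inj] by blast
  have Fg: "Fm (grad form \<phi> y) = (\<Sum>b\<in>Basis. frechet_derivative \<phi> (at y) b *\<^sub>R b)" for y
    unfolding Fm_def grad_works(1)[OF dif] ..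
  have eq: "grad form \<phi> = (\<lambda>y. g (\<Sum>b\<in>Basis. frechet_derivative \<phi> (at y) b *\<^sub>R b))"
  proof
    fix y
    have "g (Fm (grad form \<phi> y)) = grad form \<phi> y" using g(2) by (metis comp_apply id_apply)
    then show "grad form \<phi> y = g (\<Sum>b\<in>Basis. frechet_derivative \<phi> (at y) b *\<^sub>R b)" using Fg by simp
  qed
  have bl: "bounded_linear g" using g(1) linear_conv_bounded_linear by blast
  have cfd: "continuous (at x) (\<lambda>y. frechet_derivative \<phi> (at y) b)" if "b \<in> Basis" for b
    using differentiable_imp_continuous_within[OF dfd[OF that]] by simp
  have "continuous (at x) (\<lambda>y. \<Sum>b\<in>Basis. frechet_derivative \<phi> (at y) b *\<^sub>R b)"
    by (intro continuous_sum continuous_scaleR cfd continuous_const)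
  then show ?thesis unfolding eq using bounded_linear.continuous[OF bl] by blast
qed

lemma conj_grad:
  assumes dif: "\<And>x. \<phi> differentiable (at x)" and ad: "ad_invariant \<phi>"
    and hh: "h * h' = 1" "h' * h = 1"
  shows "grad form \<phi> x = h' * grad form \<phi> (h * x * h') * h"
proof (rule grad_unique)
  fix X
  have eq: "(\<lambda>e. \<phi> (x + e *\<^sub>R X)) = (\<lambda>e. \<phi> (h * (x + e *\<^sub>R X) * h'))"
    using ad hh unfolding ad_invariant_def by simp
  show "((\<lambda>e. \<phi> (x + e *\<^sub>R X)) has_real_derivative form (h' * grad form \<phi> (h * x * h') * h) X) (at 0)"
    unfolding eq by (rule deriv_LXR[OF dif])
qed

lemma of_real_comm: "(of_real t :: 'a) * y = y * of_real t"
  by (simp add: of_real_def)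

lemma grad_comm:
  assumes dif: "\<And>x. \<phi> differentiable (at x)" and ad: "ad_invariant \<phi>"
  shows "grad form \<phi> y * y = y * grad form \<phi> y"
proof -
  obtain \<delta> where d: "\<delta> > 0" "\<forall>t. 0 < t \<and> t < \<delta> \<longrightarrow> (\<exists>z. (y + of_real t) * z = 1 \<and> z * (y + of_real t) = 1)"
    using invertible_near[of y] by blast
  define t where "t = \<delta> / 2"
  have "0 < t \<and> t < \<delta>" using d(1) unfolding t_def by simp
  then obtain z where z: "(y + of_real t) * z = 1" "z * (y + of_real t) = 1" using d(2) by blast
  let ?s = "y + of_real t :: 'a"
  let ?G = "grad form \<phi> y"
  have sy: "?s * y = y * ?s" by (simp add: distrib_left distrib_right of_real_comm)
  have "?s * y * z = y" using sy z(1) by (metis mult.assoc mult.right_neutral)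
  then have G: "?G = z * ?G * ?s" using conj_grad[OF dif ad z, of y] by simp
  have "?s * ?G = ?G * ?s"
  proof -
    have "?s * ?G = ?s * z * ?G * ?s" using G by (metis mult.assoc)
    also have "\<dots> = ?G * ?s" using z(1) by simp
    finally show ?thesis .
  qed
  then have "y * ?G + of_real t * ?G = ?G * y + ?G * of_real t"
    by (simp add: distrib_left distrib_right)
  then show ?thesis by (simp add: of_real_comm)
qed

lemma ad_key_inv:
  assumes dif: "\<And>x. \<phi> differentiable (at x)" and ad: "ad_invariant \<phi>"
    and hh: "h * h' = 1" "h' * h = 1"
  shows "h * grad form \<phi> (k * h) * k = h * k * grad form \<phi> (h * k)"
proof -
  have "h * (k * h) * h' = h * k" using hh by (metis mult.assoc mult.right_neutral)
  then have "grad form \<phi> (k * h) = h' * grad form \<phi> (h * k) * h"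
    using conj_grad[OF dif ad hh, of "k * h"] by simp
  then have "h * grad form \<phi> (k * h) * k = grad form \<phi> (h * k) * (h * k)"
    using hh by (simp add: mult.assoc[symmetric])
  also have "\<dots> = h * k * grad form \<phi> (h * k)" by (rule grad_comm[OF dif ad])
  finally show ?thesis .
qed

lemma ad_key:
  assumes sm: "smooth \<phi>" and ad: "ad_invariant \<phi>"
  shows "h * grad form \<phi> (k * h) * k = h * k * grad form \<phi> (h * k)"
proof -
  have dif: "\<And>x. \<phi> differentiable (at x)" using smooth_diff[OF sm] .
  define F where "F t = (h + of_real t) * grad form \<phi> (k * (h + of_real t)) * k
      - (h + of_real t) * k * grad form \<phi> ((h + of_real t) * k)" for t :: real
  obtain \<delta> where d: "\<delta> > 0" "\<forall>t. 0 < t \<and> t < \<delta> \<longrightarrow> (\<exists>z. (h + of_real t) * z = 1 \<and> z * (h + of_real t) = 1)"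
    using invertible_near[of h] by blast
  have ev: "eventually (\<lambda>t. F t = 0) (at_right 0)"
    unfolding eventually_at_right_field
  proof (intro exI[of _ \<delta>] conjI allI impI)
    show "0 < \<delta>" by (rule d(1))
    fix t :: real assume "0 < t" "t < \<delta>"
    then obtain z where z: "(h + of_real t) * z = 1" "z * (h + of_real t) = 1" using d(2) by blast
    show "F t = 0" unfolding F_def using ad_key_inv[OF dif ad z, of k] by simp
  qed
  have bil: "bilinear ((*) :: 'a \<Rightarrow> 'a \<Rightarrow> 'a)" by (rule mult_bilinear)
  have c1: "continuous (at 0) (\<lambda>t::real. h + of_real t :: 'a)"
    unfolding of_real_def by (intro continuous_intros)
  have ck: "continuous (at 0) (\<lambda>t::real. k)" by (rule continuous_const)
  have c2: "continuous (at 0) (\<lambda>t::real. k * (h + of_real t))"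
    by (rule bilinear_continuous_compose[OF ck c1 bil])
  have c3: "continuous (at 0) (\<lambda>t::real. (h + of_real t) * k)"
    by (rule bilinear_continuous_compose[OF c1 ck bil])
  have g2: "continuous (at 0) (\<lambda>t::real. grad form \<phi> (k * (h + of_real t)))"
    using continuous_at_compose[OF c2 grad_cont[OF sm]] by (simp add: o_def)
  have g3: "continuous (at 0) (\<lambda>t::real. grad form \<phi> ((h + of_real t) * k))"
    using continuous_at_compose[OF c3 grad_cont[OF sm]] by (simp add: o_def)
  have "continuous (at 0) F"
    unfolding F_def
    by (intro continuous_diff bilinear_continuous_compose[OF _ _ bil] c1 ck g2 g3)
  then have "(F \<longlongrightarrow> F 0) (at_right 0)"
    unfolding continuous_at by (rule tendsto_mono[OF at_le, rotated]) simp
  moreover have "(F \<longlongrightarrow> 0) (at_right 0)" by (rule tendsto_eventually[OF ev])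
  ultimately have "F 0 = 0" using tendsto_unique by (metis trivial_limit_at_right_real)
  then show ?thesis unfolding F_def by simp
qed

end


lemma deriv_equiv:
  fixes \<gamma> :: "real \<Rightarrow> 'c::euclidean_space"
  shows "(\<forall>l :: 'c \<Rightarrow> real. linear l \<longrightarrow> ((\<lambda>s. l (\<gamma> s)) has_real_derivative l v) (at t))
     \<longleftrightarrow> (\<gamma> has_vector_derivative v) (at t)"
proof
  assume H: "\<forall>l :: 'c \<Rightarrow> real. linear l \<longrightarrow> ((\<lambda>s. l (\<gamma> s)) has_real_derivative l v) (at t)"
  show "(\<gamma> has_vector_derivative v) (at t)"
    unfolding has_vector_derivative_def
  proof (subst has_derivative_componentwise_within, intro ballI)
    fix i :: 'c assume "i \<in> Basis"
    have "linear (\<lambda>x::'c. x \<bullet> i)" using bounded_linear_inner_left bounded_linear.linear by blast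
    then have "((\<lambda>s. \<gamma> s \<bullet> i) has_real_derivative v \<bullet> i) (at t)" using H by blast
    moreover have "(\<lambda>x. (x *\<^sub>R v) \<bullet> i) = (*) (v \<bullet> i)" by (auto simp: fun_eq_iff)
    ultimately show "((\<lambda>x. \<gamma> x \<bullet> i) has_derivative (\<lambda>x. (x *\<^sub>R v) \<bullet> i)) (at t)"
      unfolding has_field_derivative_def by simp
  qed
next
  assume H: "(\<gamma> has_vector_derivative v) (at t)"
  show "\<forall>l :: 'c \<Rightarrow> real. linear l \<longrightarrow> ((\<lambda>s. l (\<gamma> s)) has_real_derivative l v) (at t)"
  proof (intro allI impI)
    fix l :: "'c \<Rightarrow> real" assume l: "linear l"
    have bl: "bounded_linear l" using l linear_conv_bounded_linear by blast
    have "((\<lambda>s. l (\<gamma> s)) has_derivative (\<lambda>x. l (x *\<^sub>R v))) (at t)"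
      using bounded_linear.has_derivative[OF bl H[unfolded has_vector_derivative_def]] .
    moreover have "(\<lambda>x. l (x *\<^sub>R v)) = (*) (l v)"
      using linear_scale[OF l] by (auto simp: fun_eq_iff)
    ultimately show "((\<lambda>s. l (\<gamma> s)) has_real_derivative l v) (at t)"
      unfolding has_field_derivative_def by simp
  qed
qed

theorem theorem1:
  fixes form :: "'a::{real_algebra_1, euclidean_space} \<Rightarrow> 'a \<Rightarrow> real"
    and A B C D :: "'n::enum \<Rightarrow> 'n \<Rightarrow> 'a \<Rightarrow> 'a"
  assumes form_bilinear: "bilinear form"
    and form_sym: "\<And>u v. form u v = form v u"
    and form_nondeg: "\<And>v. (\<forall>w. form v w = 0) \<Longrightarrow> v = 0"
    and form_inv: "\<And>u v w. form (u * v) w = form u (v * w)"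
    and lin: "\<And>i j. linear (A i j) \<and> linear (B i j) \<and> linear (C i j) \<and> linear (D i j)"
    and adjA: "\<And>i j u v. form (A i j u) v = - form u (A j i v)"
    and adjD: "\<And>i j u v. form (D i j u) v = - form u (D j i v)"
    and adjB: "\<And>i j u v. form (B i j u) v = form u (C j i v)"
    and poisson: "is_poisson (PBn form A B C D)"
    and cond_i: "\<And>i j. 1 \<le> i \<Longrightarrow> i \<le> int CARD('n) \<Longrightarrow> 1 \<le> j \<Longrightarrow> j \<le> int CARD('n) \<Longrightarrow> i \<noteq> j \<Longrightarrow>
        A (ix (i + 1)) (ix (j + 1)) = (\<lambda>x. - B (ix (i + 1)) (ix j) x) \<and>
        A (ix (i + 1)) (ix (j + 1)) = C (ix i) (ix (j + 1)) \<and>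
        A (ix (i + 1)) (ix (j + 1)) = (\<lambda>x. - D (ix i) (ix j) x)"
    and cond_ii: "\<And>j x. 1 \<le> j \<Longrightarrow> j \<le> int CARD('n) \<Longrightarrow>
        A (ix (j + 1)) (ix (j + 1)) x - D (ix j) (ix j) x + B (ix (j + 1)) (ix j) x
          - C (ix j) (ix (j + 1)) x = 0"
  shows
    "(\<forall>j::nat. \<forall>\<phi> \<psi> :: 'a \<Rightarrow> real. smooth \<phi> \<longrightarrow> smooth \<psi> \<longrightarrow>
        PBn form A B C D (\<lambda>u. \<phi> (Mon ((shift ^^ j) u))) (\<lambda>u. \<psi> (Mon ((shift ^^ j) u)))
        = (\<lambda>u. PB form (A (ix (int j + 1)) (ix (int j + 1))) (B (ix (int j + 1)) (ix (int j)))
                        (C (ix (int j)) (ix (int j + 1))) (D (ix (int j)) (ix (int j)))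
                        \<phi> \<psi> (Mon ((shift ^^ j) u))))
     \<and>
     (\<forall>\<phi> :: 'a \<Rightarrow> real. smooth \<phi> \<longrightarrow> ad_invariant \<phi> \<longrightarrow>
       (let \<Phi> = (\<lambda>u. \<phi> (Mon u));
            R = (\<lambda>j x. A (ix (j + 1)) (ix (j + 1)) x + B (ix (j + 1)) (ix j) x);
            L = (\<lambda>u j. R j (dl form \<phi> (Tj u j)));
            V = (\<lambda>u. \<chi> k. cmp u (pos k) * L u (pos k - 1) - L u (pos k) * cmp u (pos k))
        in \<forall>(\<gamma> :: real \<Rightarrow> ('a, 'n) vec) t.
             (\<forall>l :: ('a, 'n) vec \<Rightarrow> real. linear l \<longrightarrow>
                ((\<lambda>s. l (\<gamma> s)) has_real_derivative PBn form A B C D \<Phi> l (\<gamma> t)) (at t))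
             \<longleftrightarrow> (\<gamma> has_vector_derivative V (\<gamma> t)) (at t)))"
proof -
  interpret O: ops form A B C D
    by (intro ops.intro frm.intro ops_axioms.intro)
      (fact form_bilinear form_sym form_nondeg form_inv lin cond_i cond_ii)+
  have P1: "PBn form A B C D (\<lambda>u. \<phi> (Mon ((shift ^^ j) u))) (\<lambda>u. \<psi> (Mon ((shift ^^ j) u)))
        = (\<lambda>u. PB form (A (ix (int j + 1)) (ix (int j + 1))) (B (ix (int j + 1)) (ix (int j)))
                        (C (ix (int j)) (ix (int j + 1))) (D (ix (int j)) (ix (int j)))
                        \<phi> \<psi> (Mon ((shift ^^ j) u)))"
    if sm: "smooth \<phi>" "smooth \<psi>" for j :: nat and \<phi> \<psi> :: "'a \<Rightarrow> real"
  proof -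
    have M: "Mon ((shift ^^ j) u) = O.Tw u (int j)" for u :: "('a, 'n) vec"
      unfolding Mon_shift_pow O.Tw_def ..
    show ?thesis unfolding M
      by (rule ext, rule O.part1_Tw) (use O.smooth_diff sm in auto)
  qed
  have P2: "(let \<Phi> = (\<lambda>u. \<phi> (Mon u));
            R = (\<lambda>j x. A (ix (j + 1)) (ix (j + 1)) x + B (ix (j + 1)) (ix j) x);
            L = (\<lambda>u j. R j (dl form \<phi> (Tj u j)));
            V = (\<lambda>u. \<chi> k. cmp u (pos k) * L u (pos k - 1) - L u (pos k) * cmp u (pos k))
        in \<forall>(\<gamma> :: real \<Rightarrow> ('a, 'n) vec) t.
             (\<forall>l :: ('a, 'n) vec \<Rightarrow> real. linear l \<longrightarrow>
                ((\<lambda>s. l (\<gamma> s)) has_real_derivative PBn form A B C D \<Phi> l (\<gamma> t)) (at t))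
             \<longleftrightarrow> (\<gamma> has_vector_derivative V (\<gamma> t)) (at t))"
    if sm: "smooth \<phi>" and ad: "ad_invariant \<phi>" for \<phi> :: "'a \<Rightarrow> real"
  proof -
    have dif: "\<And>x. \<phi> differentiable (at x)" using O.smooth_diff[OF sm] .
    have adl: "\<And>h k. h * grad form \<phi> (k * h) * k = h * k * grad form \<phi> (h * k)"
      using O.ad_key[OF sm ad] .
    have V: "(\<lambda>u. \<chi> k. cmp u (pos k) * (A (ix (pos k - 1 + 1)) (ix (pos k - 1 + 1)) (dl form \<phi> (Tj u (pos k - 1)))
          + B (ix (pos k - 1 + 1)) (ix (pos k - 1)) (dl form \<phi> (Tj u (pos k - 1))))
        - (A (ix (pos k + 1)) (ix (pos k + 1)) (dl form \<phi> (Tj u (pos k)))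
          + B (ix (pos k + 1)) (ix (pos k)) (dl form \<phi> (Tj u (pos k)))) * cmp u (pos k)) = O.Vf \<phi>"
      by (simp add: O.Vf_def O.Lf_def fun_eq_iff)
    have PB: "PBn form A B C D (\<lambda>u. \<phi> (Mon u)) l x = l (O.Vf \<phi> x)" if "linear l" for l x
      using O.part2_sum[OF dif adl that] .
    show ?thesis
      unfolding Let_def
      apply (intro allI)
      apply (subst deriv_equiv[symmetric])
      apply (simp add: PB O.Vf_def O.Lf_def)
      done
  qed
  show ?thesis using P1 P2 by blast
qed

end
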